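(* In the weighted push-sum setting below, if $\{\mathbb G(t)\}$ is uniformly strongly connected, then the sequence of stochastic matrices $\{S(t)\}$ has a unique absolute probability sequence $\{\pi(t)\}$, given by $\pi_i(t)=y_i(t)$ for all $i\in\mathcal V$ and $t\ge0$.
   Context: Setting. Fix $n$ agents, $\mathcal V=\{1,\dots,n\}$. For each $t\in\{0,1,2,\dots\}$, $\mathbb G(t)=(\mathcal V,\mathcal E(t))$ is a directed graph containing a self-arc $(i,i)$ at every vertex; $\mathcal N_i(t)=\{j:(j,i)\in\mathcal E(t)\}$ and $\mathcal N_i^-(t)=\{k:(i,k)\in\mathcal E(t)\}$. Weights $w_{ij}(t)$ are positive for $j\in\mathcal N_i(t)$ and $w_{ij}(t)=0$ otherwise, and satisfy: there is $\beta>0$ with $w_{ij}(t)\ge\beta$ whenever $j\in\mathcal N_i(t)$, and $\sum_{j\in\mathcal N_i^-(t)}w_{ji}(t)=1$ for all $i,t$. The sequence $\{\mathbb G(t)\}$ is uniformly strongly connected if there is a positive integer $L$ such that for every $t\ge0$ the graph with vertex set $\mathcal V$ and edge set $\bigcup_{k=t}^{t+L-1}\mathcal E(k)$ is strongly connected. Weighted push-sum: each agent knows $c_i>0$ with $\sum_ic_i=1$; $y_i(t+1)=\sum_{j\in\mathcal N_i(t)}w_{ij}(t)y_j(t)$ with $y_i(0)=c_i$. Define the row-stochastic matrix $S(t)$ with entries $s_{ij}(t)=w_{ij}(t)y_j(t)/y_i(t+1)$. Definition: for a sequence $\{S(t)\}_{t\ge0}$ of (row) stochastic matrices, a sequence of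 stochastic vectors $\{\pi(t)\}_{t\ge0}$ (nonnegative entries summing to one) is an absolute probability sequence if $\pi^\top(t)=\pi^\top(t+1)S(t)$ for all $t\ge0$. *)

theory Defs
  imports "HOL-Analysis.Analysis"
begin

text \<open>Agents are indexed by 0..n-1 (a relabelling of 1..n). A time-varying digraph is
  E :: nat => (nat * nat) set; (j,i) in E t means arc from j to i at time t.
  Weights: w t i j is w_ij(t).\<close>

definition in_nbrs :: "(nat \<Rightarrow> (nat \<times> nat) set) \<Rightarrow> nat \<Rightarrow> nat \<Rightarrow> nat set" where
  "in_nbrs E t i = {j. (j, i) \<in> E t}"

definition out_nbrs :: "(nat \<Rightarrow> (nat \<times> nat) set) \<Rightarrow> nat \<Rightarrow> nat \<Rightarrow> nat set" where
  "out_nbrs E t i = {k. (i, k) \<in> E t}"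

definition strongly_connected :: "nat \<Rightarrow> (nat \<times> nat) set \<Rightarrow> bool" where
  "strongly_connected n A \<longleftrightarrow>
     (\<forall>i<n. \<forall>j<n. (i, j) \<in> (A \<inter> ({0..<n} \<times> {0..<n}))\<^sup>*)"

definition uniformly_strongly_connected :: "nat \<Rightarrow> (nat \<Rightarrow> (nat \<times> nat) set) \<Rightarrow> bool" where
  "uniformly_strongly_connected n E \<longleftrightarrow>
     (\<exists>L::nat. L > 0 \<and> (\<forall>t. strongly_connected n (\<Union>k\<in>{t..<t+L}. E k)))"

primrec push_sum :: "nat \<Rightarrow> (nat \<Rightarrow> nat \<Rightarrow> nat \<Rightarrow> real) \<Rightarrow> (nat \<Rightarrow> real) \<Rightarrow> nat \<Rightarrow> nat \<Rightarrow> real" where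
  "push_sum n w c 0 i = c i"
| "push_sum n w c (Suc t) i = (\<Sum>j<n. w t i j * push_sum n w c t j)"

definition push_sum_S :: "nat \<Rightarrow> (nat \<Rightarrow> nat \<Rightarrow> nat \<Rightarrow> real) \<Rightarrow> (nat \<Rightarrow> real) \<Rightarrow> nat \<Rightarrow> nat \<Rightarrow> nat \<Rightarrow> real" where
  "push_sum_S n w c t i j = w t i j * push_sum n w c t j / push_sum n w c (Suc t) i"

definition stochastic_vector :: "nat \<Rightarrow> (nat \<Rightarrow> real) \<Rightarrow> bool" where
  "stochastic_vector n p \<longleftrightarrow> (\<forall>i<n. p i \<ge> 0) \<and> (\<Sum>i<n. p i) = 1"

definition absolute_probability_sequence ::
  "nat \<Rightarrow> (nat \<Rightarrow> nat \<Rightarrow> nat \<Rightarrow> real) \<Rightarrow> (nat \<Rightarrow> nat \<Rightarrow> real) \<Rightarrow> bool" where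
  "absolute_probability_sequence n S p \<longleftrightarrow>
     (\<forall>t. stochastic_vector n (p t)) \<and>
     (\<forall>t. \<forall>j<n. p t j = (\<Sum>i<n. p (Suc t) i * S t i j))"

end

theory Submission imports Defs begin

primrec Rch :: "(nat \<Rightarrow> (nat \<times> nat) set) \<Rightarrow> nat \<Rightarrow> nat \<Rightarrow> nat \<Rightarrow> nat set" where
  "Rch E t 0 j = {j}"
| "Rch E t (Suc s) j = {k. \<exists>v\<in>Rch E t s j. (v, k) \<in> E (t + s)}"

lemma cross_arc:
  assumes "(x, y) \<in> A\<^sup>*" "x \<in> S" "y \<notin> S"
  shows "\<exists>a b. (a, b) \<in> A \<and> a \<in> S \<and> b \<notin> S"
  using assms by (induction rule: rtrancl_induct) auto

lemma lim_nonpos: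
  fixes x B c :: real
  assumes "0 \<le> c" "c < 1" "\<And>m. x \<le> c ^ m * B"
  shows "x \<le> 0"
proof -
  have "(\<lambda>m. c ^ m * B) \<longlonglongrightarrow> 0 * B"
    by (intro tendsto_mult tendsto_const LIMSEQ_power_zero) (use assms in auto)
  then have "(\<lambda>m. c ^ m * B) \<longlonglongrightarrow> 0" by simp
  then show ?thesis using assms(3) by (intro LIMSEQ_le_const) auto
qed

locale ps =
  fixes n :: nat and E :: "nat \<Rightarrow> (nat \<times> nat) set"
    and w :: "nat \<Rightarrow> nat \<Rightarrow> nat \<Rightarrow> real" and c :: "nat \<Rightarrow> real" and \<beta> :: real
    and L :: nat
  assumes n_pos: "n \<ge> 1"
    and edges: "\<And>t. E t \<subseteq> {0..<n} \<times> {0..<n}"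
    and self_arcs: "\<And>t i. i < n \<Longrightarrow> (i, i) \<in> E t"
    and w_pos: "\<And>t i j. i < n \<Longrightarrow> j \<in> in_nbrs E t i \<Longrightarrow> w t i j > 0"
    and w_zero: "\<And>t i j. j \<notin> in_nbrs E t i \<Longrightarrow> w t i j = 0"
    and beta_pos: "\<beta> > 0"
    and w_beta: "\<And>t i j. i < n \<Longrightarrow> j \<in> in_nbrs E t i \<Longrightarrow> w t i j \<ge> \<beta>"
    and col_stoch: "\<And>t i. i < n \<Longrightarrow> (\<Sum>j\<in>out_nbrs E t i. w t j i) = 1"
    and c_pos: "\<And>i. i < n \<Longrightarrow> c i > 0"
    and c_sum: "(\<Sum>i<n. c i) = 1"
    and L_pos: "L > 0"
    and sc: "\<And>t. strongly_connected n (\<Union>k\<in>{t..<t+L}. E k)"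
begin

abbreviation y where "y t i \<equiv> push_sum n w c t i"

lemma edge_lt: "(a, b) \<in> E t \<Longrightarrow> a < n \<and> b < n"
  using edges[of t] by auto

lemma w_nonneg: "0 \<le> w t i j"
proof (cases "j \<in> in_nbrs E t i")
  case True
  then have "i < n" using edge_lt by (auto simp: in_nbrs_def)
  then show ?thesis using w_pos[OF _ True] by force
qed (simp add: w_zero)

lemma colsum: assumes "j < n" shows "(\<Sum>i<n. w t i j) = 1"
proof -
  have "out_nbrs E t j \<subseteq> {..<n}" using edge_lt by (auto simp: out_nbrs_def)
  then have "(\<Sum>i\<in>out_nbrs E t j. w t i j) = (\<Sum>i<n. w t i j)"
    by (intro sum.mono_neutral_left) (auto simp: out_nbrs_def in_nbrs_def w_zero)
  then show ?thesis using col_stoch[OF assms] by simp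
qed

lemma beta_le1: "\<beta> \<le> 1"
proof -
  have "0 < n" using n_pos by simp
  have "\<beta> \<le> w 0 0 0" using w_beta[of 0 0 0] self_arcs[OF \<open>0<n\<close>] \<open>0<n\<close> by (auto simp: in_nbrs_def)
  also have "\<dots> \<le> (\<Sum>i<n. w 0 i 0)"
    by (rule member_le_sum) (use \<open>0<n\<close> w_nonneg in auto)
  finally show ?thesis using colsum[OF \<open>0<n\<close>] by simp
qed

lemma Rch_sub: "j < n \<Longrightarrow> Rch E t s j \<subseteq> {..<n}"
  by (induction s) (auto dest: edge_lt)

lemma Rch_Suc: "j < n \<Longrightarrow> Rch E t s j \<subseteq> Rch E t (Suc s) j"
  using Rch_sub self_arcs by fastforce

lemma Rch_mono: "j < n \<Longrightarrow> s \<le> s' \<Longrightarrow> Rch E t s j \<subseteq> Rch E t s' j"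
  by (rule lift_Suc_mono_le[of "\<lambda>s. Rch E t s j"]) (use Rch_Suc in blast)

lemma Rch_self: "j < n \<Longrightarrow> j \<in> Rch E t s j"
  using Rch_mono[of j 0 s t] by auto

lemma grow:
  assumes "j < n" "Rch E t r j \<noteq> {..<n}"
  shows "card (Rch E t r j) < card (Rch E t (r + L) j)"
proof -
  let ?R = "Rch E t r j"
  obtain b where b: "b < n" "b \<notin> ?R" using assms Rch_sub by blast
  have "j \<in> ?R" using Rch_self assms by auto
  let ?A = "\<Union>k\<in>{t+r..<t+r+L}. E k"
  have "(j, b) \<in> (?A \<inter> ({0..<n} \<times> {0..<n}))\<^sup>*"
    using sc[of "t+r"] assms b unfolding strongly_connected_def by auto
  then obtain a b' where ab: "(a, b') \<in> ?A" "a \<in> ?R" "b' \<notin> ?R"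
    using cross_arc[OF _ \<open>j \<in> ?R\<close> b(2)] by blast
  then obtain k where k: "k \<in> {t+r..<t+r+L}" "(a, b') \<in> E k" by auto
  have "r \<le> k - t" using k by auto
  then have "a \<in> Rch E t (k - t) j" using Rch_mono[OF assms(1), of r "k - t" t] ab by auto
  then have "b' \<in> Rch E t (Suc (k - t)) j" using k by auto
  moreover have "Suc (k - t) \<le> r + L" using k by auto
  ultimately have "b' \<in> Rch E t (r + L) j" using Rch_mono[OF assms(1)] by blast
  moreover have "?R \<subseteq> Rch E t (r + L) j" using Rch_mono[OF assms(1)] by auto
  moreover have "finite (Rch E t (r + L) j)" using Rch_sub[OF assms(1)] finite_subset by blast
  ultimately show ?thesis using ab(3) by (intro psubset_card_mono) auto
qed

lemma card_Rch: "j < n \<Longrightarrow> min n (Suc m) \<le> card (Rch E t (m * L) j)"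
proof (induction m)
  case 0 then show ?case by simp
next
  case (Suc m)
  show ?case
  proof (cases "Rch E t (m * L) j = {..<n}")
    case True
    have "Rch E t (m * L) j \<subseteq> Rch E t (Suc m * L) j" using Rch_mono[OF Suc.prems] by simp
    moreover have "Rch E t (Suc m * L) j \<subseteq> {..<n}" using Rch_sub[OF Suc.prems] .
    ultimately have "Rch E t (Suc m * L) j = {..<n}" using True by auto
    then show ?thesis by simp
  next
    case False
    from grow[OF Suc.prems False] Suc.IH[OF Suc.prems] show ?thesis by (simp add: add.commute)
  qed
qed

definition K where "K = n * L"

lemma K_pos: "K > 0" using n_pos L_pos by (simp add: K_def)

lemma all_reach: "j < n \<Longrightarrow> k < n \<Longrightarrow> k \<in> Rch E t K j"
proof -
  assume j: "j < n" and k: "k < n"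
  have "n \<le> card (Rch E t K j)" using card_Rch[OF j, of n t] by (simp add: K_def mult.commute)
  have "Rch E t K j = {..<n}"
  proof (rule card_subset_eq)
    show "Rch E t K j \<subseteq> {..<n}" using Rch_sub[OF j] .
    then have "card (Rch E t K j) \<le> n" using card_mono[of "{..<n}"] by fastforce
    then show "card (Rch E t K j) = card {..<n}" using \<open>n \<le> _\<close> by simp
  qed simp
  then show ?thesis using k by simp
qed


lemma y_pos: "i < n \<Longrightarrow> 0 < y t i"
proof (induction t arbitrary: i)
  case 0 then show ?case using c_pos by simp
next
  case (Suc t)
  have "0 < w t i i * y t i"
    using w_pos[OF Suc.prems, of i t] self_arcs[OF Suc.prems] Suc.IH[OF Suc.prems]
    by (auto simp: in_nbrs_def)
  also have "\<dots> \<le> (\<Sum>j<n. w t i j * y t j)"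
  proof (rule member_le_sum[of i "{..<n}" "\<lambda>j. w t i j * y t j"])
    show "i \<in> {..<n}" using Suc.prems by simp
    fix x assume "x \<in> {..<n} - {i}"
    then have "0 < y t x" using Suc.IH by simp
    then show "0 \<le> w t i x * y t x" using w_nonneg[of t i x] by simp
  qed simp
  finally show ?case by simp
qed

lemma y_sum: "(\<Sum>i<n. y t i) = 1"
proof (induction t)
  case 0 then show ?case using c_sum by simp
next
  case (Suc t)
  have "(\<Sum>i<n. y (Suc t) i) = (\<Sum>i<n. \<Sum>j<n. w t i j * y t j)" by simp
  also have "\<dots> = (\<Sum>j<n. \<Sum>i<n. w t i j * y t j)" by (rule sum.swap)
  also have "\<dots> = (\<Sum>j<n. (\<Sum>i<n. w t i j) * y t j)" by (simp add: sum_distrib_right)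
  also have "\<dots> = (\<Sum>j<n. y t j)" by (intro sum.cong) (auto simp: colsum)
  finally show ?case using Suc by simp
qed

lemma y_fwd: "j < n \<Longrightarrow> k \<in> Rch E t s j \<Longrightarrow> \<beta> ^ s * y t j \<le> y (t + s) k"
proof (induction s arbitrary: k)
  case 0 then show ?case by simp
next
  case (Suc s)
  obtain v where v: "v \<in> Rch E t s j" "(v, k) \<in> E (t + s)" using Suc.prems by auto
  have vk: "v < n" "k < n" using edge_lt[OF v(2)] by auto
  have "\<beta> ^ Suc s * y t j = \<beta> * (\<beta> ^ s * y t j)" by simp
  also have "\<dots> \<le> \<beta> * y (t + s) v" using Suc.IH[OF Suc.prems(1) v(1)] beta_pos by simp
  also have "\<dots> \<le> w (t + s) k v * y (t + s) v"
    using w_beta[OF vk(2), of v "t+s"] v(2) y_pos[OF vk(1), of "t+s"] by (intro mult_right_mono) (auto simp: in_nbrs_def)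
  also have "\<dots> \<le> (\<Sum>i<n. w (t + s) k i * y (t + s) i)"
  proof (rule member_le_sum[of v "{..<n}" "\<lambda>i. w (t + s) k i * y (t + s) i"])
    show "v \<in> {..<n}" using vk by simp
    fix x assume "x \<in> {..<n} - {v}"
    then have "0 < y (t + s) x" using y_pos by simp
    then show "0 \<le> w (t + s) k x * y (t + s) x" using w_nonneg[of "t + s" k x] by simp
  qed simp
  finally show ?case by simp
qed

definition cmin where "cmin = Min (c ` {..<n})"
definition \<rho> where "\<rho> = \<beta> ^ K * min cmin (1 / real n)"

lemma rho_pos: "0 < \<rho>"
proof -
  have "0 < cmin" unfolding cmin_def using c_pos n_pos by (subst Min_gr_iff) (auto simp: lessThan_empty_iff)
  then show ?thesis using beta_pos n_pos by (simp add: \<rho>_def)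
qed

lemma y_lower: "i < n \<Longrightarrow> \<rho> \<le> y t i"
proof (cases "t < K")
  case True
  assume i: "i < n"
  have "i \<in> Rch E 0 t i" using Rch_self[OF i] .
  then have "\<beta> ^ t * c i \<le> y t i" using y_fwd[OF i, of i 0 t] by simp
  moreover have "\<beta> ^ K \<le> \<beta> ^ t" using True beta_le1 beta_pos by (intro power_decreasing) auto
  moreover have "cmin \<le> c i" unfolding cmin_def using i by auto
  moreover have "\<rho> \<le> \<beta> ^ K * cmin" unfolding \<rho>_def using beta_pos by (intro mult_left_mono) auto
  ultimately have "\<rho> \<le> \<beta> ^ K * c i" using beta_pos
    by (meson order_trans mult_left_mono zero_le_power less_imp_le)
  also have "\<dots> \<le> \<beta> ^ t * c i" using \<open>\<beta> ^ K \<le> \<beta> ^ t\<close> c_pos[OF i] by (intro mult_right_mono) auto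
  finally show ?thesis using \<open>\<beta> ^ t * c i \<le> y t i\<close> by simp
next
  case False
  assume i: "i < n"
  have "\<forall>j<n. \<beta> ^ K * y (t - K) j \<le> y t i"
    using y_fwd[of _ i "t - K" K] all_reach i False by fastforce
  then have "(\<Sum>j<n. \<beta> ^ K * y (t - K) j) \<le> (\<Sum>j<n. y t i)" by (intro sum_mono) auto
  then have "\<beta> ^ K \<le> real n * y t i" using y_sum by (simp add: sum_distrib_left[symmetric])
  then have "\<beta> ^ K / real n \<le> y t i" using n_pos by (simp add: divide_simps mult.commute)
  moreover have "\<rho> \<le> \<beta> ^ K * (1 / real n)" unfolding \<rho>_def using beta_pos by (intro mult_left_mono) auto
  ultimately show ?thesis by simp
qed

definition solves where
  "solves z \<longleftrightarrow> (\<forall>s j. j < n \<longrightarrow> z s j = (\<Sum>i<n. w s i j * z (Suc s) i))"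

lemma z_bwd:
  assumes "solves z" "\<And>s i. s \<le> T \<Longrightarrow> i < n \<Longrightarrow> 0 \<le> z s i"
    and "j < n" "k \<in> Rch E t s j" "t + s \<le> T"
  shows "\<beta> ^ s * z (t + s) k \<le> z t j"
  using assms(4,5)
proof (induction s arbitrary: k)
  case 0 then show ?case by simp
next
  case (Suc s)
  obtain v where v: "v \<in> Rch E t s j" "(v, k) \<in> E (t + s)" using Suc.prems by auto
  have vk: "v < n" "k < n" using edge_lt[OF v(2)] by auto
  have nn: "\<And>i. i < n \<Longrightarrow> 0 \<le> z (Suc (t + s)) i" using assms(2) Suc.prems by auto
  have "\<beta> ^ Suc s * z (t + Suc s) k = \<beta> ^ s * (\<beta> * z (Suc (t + s)) k)" by simp
  also have "\<dots> \<le> \<beta> ^ s * (w (t + s) k v * z (Suc (t + s)) k)"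
    using w_beta[OF vk(2), of v "t+s"] v(2) nn[OF vk(2)] beta_pos
    by (intro mult_left_mono mult_right_mono) (auto simp: in_nbrs_def)
  also have "\<dots> \<le> \<beta> ^ s * (\<Sum>i<n. w (t + s) i v * z (Suc (t + s)) i)"
    using beta_pos
    by (intro mult_left_mono member_le_sum[of k "{..<n}" "\<lambda>i. w (t + s) i v * z (Suc (t + s)) i"])
       (use vk nn w_nonneg in \<open>auto intro: mult_nonneg_nonneg\<close>)
  also have "\<dots> = \<beta> ^ s * z (t + s) v" using assms(1) vk by (simp add: solves_def)
  also have "\<dots> \<le> z t j" using Suc.IH[OF v(1)] Suc.prems by simp
  finally show ?case .
qed

lemma solves_interval:
  assumes "solves z" "\<And>i. i < n \<Longrightarrow> a \<le> z T i \<and> z T i \<le> b"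
  shows "i < n \<Longrightarrow> a \<le> z (T - d) i \<and> z (T - d) i \<le> b"
proof (induction d arbitrary: i)
  case 0 then show ?case using assms by simp
next
  case (Suc d)
  show ?case
  proof (cases "d < T")
    case False
    then have "T - Suc d = T - d" by simp
    then show ?thesis using Suc by simp
  next
    case True
    then have e: "Suc (T - Suc d) = T - d" by simp
    have eq: "z (T - Suc d) i = (\<Sum>j<n. w (T - Suc d) j i * z (T - d) j)"
      using assms(1) Suc.prems e by (simp add: solves_def)
    have "(\<Sum>j<n. w (T - Suc d) j i * a) \<le> (\<Sum>j<n. w (T - Suc d) j i * z (T - d) j)"
      using Suc.IH w_nonneg by (intro sum_mono mult_left_mono) auto
    moreover have "(\<Sum>j<n. w (T - Suc d) j i * z (T - d) j) \<le> (\<Sum>j<n. w (T - Suc d) j i * b)"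
      using Suc.IH w_nonneg by (intro sum_mono mult_left_mono) auto
    ultimately show ?thesis using eq colsum[OF Suc.prems]
      by (simp add: sum_distrib_right[symmetric])
  qed
qed

lemma solves_shift:
  assumes "solves z" shows "solves (\<lambda>s i. z s i - a)" "solves (\<lambda>s i. a - z s i)"
proof -
  have *: "(\<Sum>i<n. w s i j * a) = a" if "j < n" for s j
    using colsum[OF that, of s] by (simp add: sum_distrib_right[symmetric])
  show "solves (\<lambda>s i. z s i - a)" using assms unfolding solves_def
    by (auto simp: right_diff_distrib sum_subtractf *)
  show "solves (\<lambda>s i. a - z s i)" using assms unfolding solves_def
    by (auto simp: right_diff_distrib sum_subtractf *)
qed

definition P where "P z s \<delta> \<longleftrightarrow> (\<forall>i1<n. \<forall>i2<n. z s i1 - z s i2 \<le> \<delta>)"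

lemma contract:
  assumes "solves z" "P z (t + K) \<delta>"
  shows "P z t ((1 - \<beta> ^ K) * \<delta>)"
proof -
  let ?T = "t + K"
  let ?S = "z ?T ` {..<n}"
  have fin: "finite ?S" "?S \<noteq> {}" using n_pos by (auto simp: lessThan_empty_iff)
  obtain kmin where kmin: "kmin < n" "z ?T kmin = Min ?S" using Min_in[OF fin] by auto
  obtain kmax where kmax: "kmax < n" "z ?T kmax = Max ?S" using Max_in[OF fin] by auto
  define a where "a = Min ?S"
  define b where "b = Max ?S"
  have ab: "\<And>i. i < n \<Longrightarrow> a \<le> z ?T i \<and> z ?T i \<le> b" using fin unfolding a_def b_def by auto
  have int: "\<And>s i. s \<le> ?T \<Longrightarrow> i < n \<Longrightarrow> a \<le> z s i \<and> z s i \<le> b"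
  proof -
    fix s i assume "s \<le> ?T" "i < n"
    then show "a \<le> z s i \<and> z s i \<le> b"
      using solves_interval[OF assms(1) ab, of i "?T - s"] by simp
  qed
  have "z ?T kmax - z ?T kmin \<le> \<delta>" using assms(2) kmin(1) kmax(1) unfolding P_def by blast
  then have ba: "b - a \<le> \<delta>" using kmin kmax unfolding a_def b_def by simp
  have ba0: "0 \<le> b - a" using ab[OF kmin(1)] by simp
  let ?g = "\<beta> ^ K"
  have g: "0 \<le> ?g" "?g \<le> 1" using beta_pos beta_le1 by (auto intro: power_le_one)
  have lo: "?g * (b - a) \<le> z t j - a" if "j < n" for j
    using z_bwd[OF solves_shift(1)[OF assms(1), of a], of ?T j kmax t K] int all_reach[OF that kmax(1)]
      that kmax unfolding b_def by simp
  have hi: "?g * (b - a) \<le> b - z t j" if "j < n" for j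
    using z_bwd[OF solves_shift(2)[OF assms(1), of b], of ?T j kmin t K] int all_reach[OF that kmin(1)]
      that kmin unfolding a_def by simp
  show ?thesis unfolding P_def
  proof (intro allI impI)
    fix i1 i2 assume "i1 < n" "i2 < n"
    have "z t i1 - z t i2 \<le> (b - a) - 2 * (?g * (b - a))"
      using lo[OF \<open>i2 < n\<close>] hi[OF \<open>i1 < n\<close>] by linarith
    also have "\<dots> = (1 - 2 * ?g) * (b - a)" by (simp add: algebra_simps)
    finally have "z t i1 - z t i2 \<le> (1 - 2 * ?g) * (b - a)" .
    also have "\<dots> \<le> (1 - ?g) * (b - a)" using g ba0 by (intro mult_right_mono) auto
    also have "\<dots> \<le> (1 - ?g) * \<delta>" using g ba by (intro mult_left_mono) auto
    finally show "z t i1 - z t i2 \<le> (1 - ?g) * \<delta>" .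
  qed
qed

lemma const:
  assumes "solves z" "\<And>s. P z s B"
  shows "i1 < n \<Longrightarrow> i2 < n \<Longrightarrow> z t i1 - z t i2 \<le> 0"
proof -
  assume i: "i1 < n" "i2 < n"
  have "\<forall>t. P z t ((1 - \<beta> ^ K) ^ m * B)" for m
  proof (induction m)
    case 0 then show ?case using assms(2) by simp
  next
    case (Suc m)
    show ?case using contract[OF assms(1) Suc[rule_format, of "t + K" for t]]
      by (simp add: mult.assoc)
  qed
  then have "z t i1 - z t i2 \<le> (1 - \<beta> ^ K) ^ m * B" for m using i unfolding P_def by blast
  moreover have "0 \<le> 1 - \<beta> ^ K" "1 - \<beta> ^ K < 1"
    using beta_pos beta_le1 by (auto intro: power_le_one)
  ultimately show ?thesis by (intro lim_nonpos[where c = "1 - \<beta> ^ K" and B = B]) auto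
qed

lemma exist: "absolute_probability_sequence n (push_sum_S n w c) (push_sum n w c)"
  unfolding absolute_probability_sequence_def stochastic_vector_def
proof (intro conjI allI impI)
  fix t i assume "i < n" then show "0 \<le> y t i" using y_pos less_imp_le by blast
next
  fix t show "(\<Sum>i<n. y t i) = 1" by (rule y_sum)
next
  fix t j assume j: "j < n"
  have nz: "\<And>i. i < n \<Longrightarrow> y (Suc t) i \<noteq> 0" using y_pos by (metis less_irrefl)
  have "(\<Sum>i<n. y (Suc t) i * push_sum_S n w c t i j) = (\<Sum>i<n. w t i j * y t j)"
    using nz by (intro sum.cong) (auto simp: push_sum_S_def simp del: push_sum.simps)
  also have "\<dots> = y t j" using colsum[OF j] by (simp add: sum_distrib_right[symmetric])
  finally show "y t j = (\<Sum>i<n. y (Suc t) i * push_sum_S n w c t i j)" by simp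
qed

lemma unique:
  assumes "absolute_probability_sequence n (push_sum_S n w c) p" "i < n"
  shows "p t i = y t i"
proof -
  have st: "\<And>t. stochastic_vector n (p t)" and rec: "\<And>t j. j < n \<Longrightarrow> p t j = (\<Sum>i<n. p (Suc t) i * push_sum_S n w c t i j)"
    using assms unfolding absolute_probability_sequence_def by auto
  define q where "q s i = p s i / y s i" for s i
  have sol: "solves q" unfolding solves_def
  proof (intro allI impI)
    fix s j assume j: "j < n"
    have "p s j = (\<Sum>i<n. p (Suc s) i * push_sum_S n w c s i j)" using rec[OF j] .
    also have "\<dots> = (\<Sum>i<n. y s j * (w s i j * q (Suc s) i))"
      using y_pos by (intro sum.cong) (auto simp: push_sum_S_def q_def simp del: push_sum.simps)
    also have "\<dots> = y s j * (\<Sum>i<n. w s i j * q (Suc s) i)" by (simp add: sum_distrib_left)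
    finally show "q s j = (\<Sum>i<n. w s i j * q (Suc s) i)"
      using y_pos[OF j, of s] unfolding q_def by (simp add: field_simps)
  qed
  have qb: "0 \<le> q s k \<and> q s k \<le> 1 / \<rho>" if "k < n" for s k
  proof -
    have p0: "\<And>k. k < n \<Longrightarrow> 0 \<le> p s k" and p1: "(\<Sum>k<n. p s k) = 1"
      using st[of s] unfolding stochastic_vector_def by auto
    have "p s k \<le> (\<Sum>k<n. p s k)" by (rule member_le_sum) (use that p0 in auto)
    then have pk: "p s k \<le> 1" using p1 by simp
    have yk: "\<rho> \<le> y s k" "0 < y s k" using y_lower y_pos that by auto
    have "q s k \<le> 1 / y s k" unfolding q_def using pk yk by (simp add: divide_right_mono)
    also have "\<dots> \<le> 1 / \<rho>" using yk rho_pos by (intro divide_left_mono) auto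
    finally show ?thesis unfolding q_def using p0[OF that] yk by auto
  qed
  have PB: "P q s (1 / \<rho>)" for s unfolding P_def
  proof (intro allI impI)
    fix i1 i2 assume "i1 < n" "i2 < n"
    then show "q s i1 - q s i2 \<le> 1 / \<rho>" using qb[of i1 s] qb[of i2 s] by linarith
  qed
  have eq: "q t k = q t 0" if "k < n" for k
    using const[OF sol PB, of k 0 t] const[OF sol PB, of 0 k t] that n_pos by simp
  have pe: "p t k = q t 0 * y t k" if "k < n" for k
    using eq[OF that] y_pos[OF that, of t] unfolding q_def by (simp add: field_simps)
  have "1 = (\<Sum>k<n. p t k)" using st[of t] unfolding stochastic_vector_def by simp
  also have "\<dots> = q t 0 * (\<Sum>k<n. y t k)" using pe by (simp add: sum_distrib_left)
  finally have "q t 0 = 1" using y_sum by simp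
  then show ?thesis using pe[OF assms(2)] by simp
qed
end

theorem proposition5:
  fixes n :: nat and E :: "nat \<Rightarrow> (nat \<times> nat) set"
    and w :: "nat \<Rightarrow> nat \<Rightarrow> nat \<Rightarrow> real" and c :: "nat \<Rightarrow> real" and \<beta> :: real
  assumes n_pos: "n \<ge> 1"
    and edges: "\<And>t. E t \<subseteq> {0..<n} \<times> {0..<n}"
    and self_arcs: "\<And>t i. i < n \<Longrightarrow> (i, i) \<in> E t"
    and w_pos: "\<And>t i j. i < n \<Longrightarrow> j \<in> in_nbrs E t i \<Longrightarrow> w t i j > 0"
    and w_zero: "\<And>t i j. j \<notin> in_nbrs E t i \<Longrightarrow> w t i j = 0"
    and beta_pos: "\<beta> > 0"
    and w_beta: "\<And>t i j. i < n \<Longrightarrow> j \<in> in_nbrs E t i \<Longrightarrow> w t i j \<ge> \<beta>"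
    and col_stoch: "\<And>t i. i < n \<Longrightarrow> (\<Sum>j\<in>out_nbrs E t i. w t j i) = 1"
    and c_pos: "\<And>i. i < n \<Longrightarrow> c i > 0"
    and c_sum: "(\<Sum>i<n. c i) = 1"
    and usc: "uniformly_strongly_connected n E"
  shows "absolute_probability_sequence n (push_sum_S n w c) (push_sum n w c)
    \<and> (\<forall>p. absolute_probability_sequence n (push_sum_S n w c) p \<longrightarrow>
           (\<forall>t. \<forall>i<n. p t i = push_sum n w c t i))"
proof -
  obtain L where L: "L > 0" "\<And>t. strongly_connected n (\<Union>k\<in>{t..<t+L}. E k)"
    using usc unfolding uniformly_strongly_connected_def by blast
  interpret ps n E w c \<beta> L
    using assms L by unfold_locales auto
  show ?thesis using exist unique by blast
qed

end
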